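(* Let $k\ge 2$ be a fixed integer, and suppose the following supersaturation statement holds for this $k$: there are constants $C,c>0$ (depending only on $k$) such that every bipartite graph with parts $A,B$ and $m \geq C\bigl(|A|+|B|+(|A||B|)^{(k+1)/(2k)}\bigr)$ edges contains at least $c\, m^{2k}/(|A|^k|B|^k)$ cycles of length $2k$. Let $\mathbf{A}$ be the adjacency matrix of an undirected graph with maximum degree $\Delta$, $m$ edges, and $t$ cycles of length $2k$. Then $\|\mathbf{A}\|_\Phi = O\bigl(m^{1/(k+1)} + t^{1/(2k)}\log\Delta + \sqrt{\Delta}\bigr)$, where the implied constant depends only on $k$.
   Context: For a real vector $\mathbf{v}\in\mathbb{R}^n$, its $\Phi$-norm is $\|\mathbf{v}\|_\Phi = \int_0^\infty \sqrt{|\{ i : |v_i| \geq x\}|}\,dx$. For a real $n\times n$ matrix $\mathbf{A}$, $\|\mathbf{A}\|_\Phi = \sup_{\mathbf{v}\neq \mathbf{0}} \|\mathbf{A}\mathbf{v}\|_\Phi/\|\mathbf{v}\|_\Phi$ (the operator norm induced by the vector $\Phi$-norm). A cycle of length $2k$ means a subgraph isomorphic to the cycle $C_{2k}$ on $2k$ distinct vertices. *)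

theory Defs
  imports "HOL-Analysis.Analysis"
begin

text \<open>Cycles of length 2k in a graph given by a symmetric edge relation E:
  a subgraph isomorphic to C_{2k} is determined by its edge set, which is the
  set of unordered pairs {f i, f (i+1 mod 2k)} for an injective closed walk f.\<close>
definition cycles_2k :: "nat \<Rightarrow> ('a \<Rightarrow> 'a \<Rightarrow> bool) \<Rightarrow> 'a set set set" where
  "cycles_2k k E = {S. \<exists>f :: nat \<Rightarrow> 'a. inj_on f {..<2*k}
      \<and> (\<forall>i<2*k. E (f i) (f (Suc i mod (2*k))))
      \<and> S = {{f i, f (Suc i mod (2*k))} | i. i < 2*k}}"

definition num_cycles_2k :: "nat \<Rightarrow> ('a \<Rightarrow> 'a \<Rightarrow> bool) \<Rightarrow> nat" where
  "num_cycles_2k k E = card (cycles_2k k E)"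

definition bip_rel :: "('a \<times> 'a) set \<Rightarrow> 'a \<Rightarrow> 'a \<Rightarrow> bool" where
  "bip_rel F x y \<longleftrightarrow> (x, y) \<in> F \<or> (y, x) \<in> F"

definition supersaturation :: "nat \<Rightarrow> bool" where
  "supersaturation k \<longleftrightarrow> (\<exists>C c :: real. C > 0 \<and> c > 0 \<and>
     (\<forall>(A :: nat set) (B :: nat set) (F :: (nat \<times> nat) set).
        finite A \<longrightarrow> finite B \<longrightarrow> A \<inter> B = {} \<longrightarrow> F \<subseteq> A \<times> B \<longrightarrow>
        real (card F) \<ge> C * (real (card A) + real (card B)
                            + (real (card A) * real (card B)) powr (real (k+1) / real (2*k)))
        \<longrightarrow> real (num_cycles_2k k (bip_rel F))
              \<ge> c * real (card F) ^ (2*k) / (real (card A) ^ k * real (card B) ^ k)))"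

definition simple_graph :: "nat \<Rightarrow> (nat \<Rightarrow> nat \<Rightarrow> bool) \<Rightarrow> bool" where
  "simple_graph n E \<longleftrightarrow> (\<forall>i j. E i j \<longrightarrow> i < n \<and> j < n \<and> i \<noteq> j \<and> E j i)"

definition adj_matrix :: "(nat \<Rightarrow> nat \<Rightarrow> bool) \<Rightarrow> nat \<Rightarrow> nat \<Rightarrow> real" where
  "adj_matrix E i j = (if E i j then 1 else 0)"

definition num_edges :: "nat \<Rightarrow> (nat \<Rightarrow> nat \<Rightarrow> bool) \<Rightarrow> nat" where
  "num_edges n E = card {(i, j). i < j \<and> j < n \<and> E i j}"

definition degree :: "nat \<Rightarrow> (nat \<Rightarrow> nat \<Rightarrow> bool) \<Rightarrow> nat \<Rightarrow> nat" where
  "degree n E i = card {j. j < n \<and> E i j}"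

definition max_degree :: "nat \<Rightarrow> (nat \<Rightarrow> nat \<Rightarrow> bool) \<Rightarrow> nat" where
  "max_degree n E = Max (insert 0 (degree n E ` {..<n}))"

definition phi_norm :: "nat \<Rightarrow> (nat \<Rightarrow> real) \<Rightarrow> real" where
  "phi_norm n v = integral {0..} (\<lambda>x. sqrt (real (card {i. i < n \<and> \<bar>v i\<bar> \<ge> x})))"

definition mat_vec :: "nat \<Rightarrow> (nat \<Rightarrow> nat \<Rightarrow> real) \<Rightarrow> (nat \<Rightarrow> real) \<Rightarrow> nat \<Rightarrow> real" where
  "mat_vec n M v = (\<lambda>i. \<Sum>j<n. M i j * v j)"

text \<open>Induced operator norm; 0 is inserted only so that the case n = 0 is well-defined
  (all ratios are nonnegative, so this does not change the value for n \<ge> 1).\<close>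
definition phi_op_norm :: "nat \<Rightarrow> (nat \<Rightarrow> nat \<Rightarrow> real) \<Rightarrow> real" where
  "phi_op_norm n M = Sup (insert 0 {phi_norm n (mat_vec n M v) / phi_norm n v | v. \<exists>i<n. v i \<noteq> 0})"

end

theory Submission
  imports Defs
begin

definition cw :: "nat \<Rightarrow> real" where
  "cw j = sqrt (real j) - sqrt (real (j - 1))"

lemma cw_alt: assumes "j \<ge> 1" shows "cw j = 1 / (sqrt (real j) + sqrt (real (j - 1)))"
proof -
  define a where "a = sqrt (real j)"
  define b where "b = sqrt (real (j - 1))"
  have pos: "a + b > 0" using assms by (simp add: add_pos_nonneg a_def b_def)
  have "a * a = real j" by (simp add: a_def)
  moreover have "b * b = real j - 1" using assms by (simp add: b_def)
  ultimately have "(a - b) * (a + b) = 1" by (simp add: algebra_simps)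
  then have "a - b = 1 / (a + b)" using pos by (simp add: field_simps)
  then show ?thesis by (simp add: cw_def a_def b_def)
qed

lemma cw_pos: "j \<ge> 1 \<Longrightarrow> cw j > 0"
  by (simp add: cw_alt add_pos_nonneg)
lemma cw_nonneg: "cw j \<ge> 0"
  unfolding cw_def by simp

lemma cw_anti: assumes "1 \<le> i" "i \<le> j" shows "cw j \<le> cw i"
proof -
  have "sqrt (real i) + sqrt (real (i - 1)) \<le> sqrt (real j) + sqrt (real (j - 1))"
    using assms by (intro add_mono) auto
  moreover have "sqrt (real i) + sqrt (real (i - 1)) > 0" using assms by (simp add: add_pos_nonneg)
  ultimately show ?thesis using assms by (simp add: cw_alt frac_le)
qed

lemma cw_sum: "(\<Sum>j\<in>{1..t}. cw j) = sqrt (real t)"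
proof (induction t)
  case 0 then show ?case by simp
next
  case (Suc t) then show ?case by (simp add: cw_def)
qed

lemma cw_sub: "finite R \<Longrightarrow> 0 \<notin> R \<Longrightarrow> (\<Sum>r\<in>R. cw r) \<le> sqrt (real (card R))"
proof (induction "card R" arbitrary: R)
  case 0 then show ?case by simp
next
  case (Suc t)
  then have ne: "R \<noteq> {}" by auto
  define M where "M = Max R"
  have MR: "M \<in> R" using ne Suc.prems by (simp add: M_def)
  have "R \<subseteq> {1..M}"
  proof
    fix r assume "r \<in> R"
    then show "r \<in> {1..M}" using Suc.prems M_def Max_ge[of R r]
      by (cases r) auto
  qed
  then have "card R \<le> M" using card_mono[of "{1..M}" R] by simp
  then have "cw M \<le> cw (card R)" using cw_anti[of "card R" M] Suc.hyps(2) by simp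
  have "(\<Sum>r\<in>R. cw r) = cw M + (\<Sum>r\<in>R - {M}. cw r)"
    using MR Suc.prems by (simp add: sum.remove)
  also have "(\<Sum>r\<in>R - {M}. cw r) \<le> sqrt (real (card (R - {M})))"
    using Suc.hyps(1)[of "R - {M}"] Suc.prems Suc.hyps(2) MR by simp
  also have "card (R - {M}) = t" using Suc.hyps(2) MR Suc.prems by simp
  finally have "(\<Sum>r\<in>R. cw r) \<le> cw (card R) + sqrt (real t)" using \<open>cw M \<le> cw (card R)\<close> by linarith
  also have "\<dots> = sqrt (real (card R))" using Suc.hyps(2)[symmetric] by (simp add: cw_def)
  finally show ?case .
qed

lemma cw_inj_sum:
  assumes "finite T" "inj_on \<rho> T" "\<forall>i\<in>T. \<rho> i \<ge> 1"
  shows "(\<Sum>i\<in>T. cw (\<rho> i)) \<le> sqrt (real (card T))"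
proof -
  have "(\<Sum>i\<in>T. cw (\<rho> i)) = (\<Sum>r\<in>\<rho> ` T. cw r)" using assms by (simp add: sum.reindex)
  also have "\<dots> \<le> sqrt (real (card (\<rho> ` T)))"
    by (intro cw_sub) (use assms in force)+
  also have "card (\<rho> ` T) = card T" using assms by (simp add: card_image)
  finally show ?thesis .
qed


definition rkset :: "(nat \<Rightarrow> real) \<Rightarrow> nat \<Rightarrow> nat \<Rightarrow> nat set" where
  "rkset a n i = {j. j < n \<and> (a j > a i \<or> (a j = a i \<and> j \<le> i))}"

definition rk :: "(nat \<Rightarrow> real) \<Rightarrow> nat \<Rightarrow> nat \<Rightarrow> nat" where
  "rk a n i = card (rkset a n i)"

lemma rkset_fin: "finite (rkset a n i)"
  unfolding rkset_def by auto

lemma rk_ge1: "i < n \<Longrightarrow> rk a n i \<ge> 1"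
proof -
  assume "i < n"
  then have "i \<in> rkset a n i" by (simp add: rkset_def)
  then show ?thesis unfolding rk_def using rkset_fin
    by (metis One_nat_def Suc_leI card_gt_0_iff empty_iff)
qed

lemma rkset_trans: "j \<in> rkset a n i' \<Longrightarrow> i' \<in> rkset a n i \<Longrightarrow> j \<in> rkset a n i"
  unfolding rkset_def by auto

lemma rk_less: assumes "i < n" "i' < n" "i' \<in> rkset a n i" "i \<noteq> i'"
  shows "rk a n i' < rk a n i"
proof -
  have "rkset a n i' \<subseteq> rkset a n i" using assms rkset_trans by blast
  moreover have "i \<in> rkset a n i" using assms by (simp add: rkset_def)
  moreover have "i \<notin> rkset a n i'" using assms by (auto simp: rkset_def)
  ultimately have "rkset a n i' \<subset> rkset a n i" by blast
  then show ?thesis unfolding rk_def by (simp add: psubset_card_mono rkset_fin)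
qed

lemma rk_inj: "inj_on (rk a n) {..<n}"
proof (rule inj_onI)
  fix i i' assume "i \<in> {..<n}" "i' \<in> {..<n}" "rk a n i = rk a n i'"
  then show "i = i'"
  proof (cases "i' \<in> rkset a n i")
    case True then show ?thesis using rk_less \<open>i \<in> {..<n}\<close> \<open>i' \<in> {..<n}\<close> \<open>rk a n i = rk a n i'\<close>
      by (metis lessThan_iff less_irrefl)
  next
    case False
    then have "i \<in> rkset a n i'" using \<open>i \<in> {..<n}\<close> \<open>i' \<in> {..<n}\<close> by (auto simp: rkset_def)
    then show ?thesis using rk_less \<open>i \<in> {..<n}\<close> \<open>i' \<in> {..<n}\<close> \<open>rk a n i = rk a n i'\<close>
      by (metis lessThan_iff less_irrefl)
  qed
qed

lemma rk_le_card: assumes "i < n" "a i \<ge> x"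
  shows "rk a n i \<le> card {j. j < n \<and> a j \<ge> x}"
proof -
  have "rkset a n i \<subseteq> {j. j < n \<and> a j \<ge> x}" using assms by (auto simp: rkset_def)
  then show ?thesis unfolding rk_def by (intro card_mono) auto
qed

lemma rk_image: "rk a n ` {j. j < n \<and> a j \<ge> x} = {1..card {j. j < n \<and> a j \<ge> x}}"
proof -
  let ?T = "{j. j < n \<and> a j \<ge> x}"
  have sub: "rk a n ` ?T \<subseteq> {1..card ?T}" using rk_ge1 rk_le_card by auto
  have inj: "inj_on (rk a n) ?T" using rk_inj by (rule inj_on_subset) auto
  have "card (rk a n ` ?T) = card ?T" using inj by (simp add: card_image)
  then have "card (rk a n ` ?T) = card {1..card ?T}" by simp
  then show ?thesis using sub by (intro card_subset_eq) auto
qed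

lemma rk_sum: "(\<Sum>i\<in>{j. j < n \<and> a j \<ge> x}. cw (rk a n i)) = sqrt (real (card {j. j < n \<and> a j \<ge> x}))"
proof -
  let ?T = "{j. j < n \<and> a j \<ge> x}"
  have inj: "inj_on (rk a n) ?T" using rk_inj by (rule inj_on_subset) auto
  have "(\<Sum>i\<in>?T. cw (rk a n i)) = (\<Sum>r\<in>rk a n ` ?T. cw r)" using inj by (simp add: sum.reindex)
  also have "\<dots> = sqrt (real (card ?T))" unfolding rk_image by (rule cw_sum)
  finally show ?thesis .
qed

lemma sum_indicator_eq: fixes w a :: "nat \<Rightarrow> real" and x :: real shows "(\<Sum>i<n. w i * (if a i \<ge> x then 1 else 0)) = (\<Sum>i\<in>{j. j < n \<and> a j \<ge> x}. w i)"
proof -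
  have "(\<Sum>i<n. w i * (if a i \<ge> x then 1 else 0)) = (\<Sum>i\<in>{..<n}. if a i \<ge> x then w i else 0)"
    by (intro sum.cong) auto
  also have "\<dots> = (\<Sum>i\<in>{..<n} \<inter> {j. a j \<ge> x}. w i)" by (simp add: sum.inter_restrict)
  also have "{..<n} \<inter> {j. a j \<ge> x} = {j. j < n \<and> a j \<ge> x}" by auto
  finally show ?thesis .
qed

lemma ind_int: assumes "a \<ge> 0" shows "((\<lambda>x::real. if a \<ge> x then 1 else 0) has_integral a) {0..}"
proof -
  have "((\<lambda>x::real. 1::real) has_integral a) {0..a}"
    using has_integral_const_real[of "1::real" 0 a] assms by simp
  then have "((\<lambda>x::real. if x \<in> {0..a} then 1 else 0) has_integral a) {0..}"
    by (subst has_integral_restrict) auto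
  then show ?thesis by (rule has_integral_cong[THEN iffD1, rotated]) auto
qed

lemma layer_int:
  fixes w a :: "nat \<Rightarrow> real"
  assumes "\<forall>i<n. a i \<ge> 0"
  shows "((\<lambda>x. \<Sum>i<n. w i * (if a i \<ge> x then 1 else 0)) has_integral (\<Sum>i<n. w i * a i)) {0..}"
  using assms by (intro has_integral_sum has_integral_mult_right) (auto intro: ind_int)

lemma phi_pointwise: fixes v :: "nat \<Rightarrow> real" and x :: real shows "sqrt (real (card {i. i < n \<and> \<bar>v i\<bar> \<ge> x})) =
    (\<Sum>i<n. cw (rk (\<lambda>j. \<bar>v j\<bar>) n i) * (if \<bar>v i\<bar> \<ge> x then 1 else 0))"
  using rk_sum[where n=n and a="\<lambda>j. \<bar>v j\<bar>" and x=x] sum_indicator_eq[where w="\<lambda>i. cw (rk (\<lambda>j. \<bar>v j\<bar>) n i)" and n=n and a="\<lambda>j. \<bar>v j\<bar>" and x=x]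
  by simp

lemma phi_has_int: "((\<lambda>x. sqrt (real (card {i. i < n \<and> \<bar>v i\<bar> \<ge> x}))) has_integral
     (\<Sum>i<n. cw (rk (\<lambda>j. \<bar>v j\<bar>) n i) * \<bar>v i\<bar>)) {0..}"
  unfolding phi_pointwise using layer_int[where n=n and a="\<lambda>j. \<bar>v j\<bar>"] by simp

lemma phi_eq: "phi_norm n v = (\<Sum>i<n. cw (rk (\<lambda>j. \<bar>v j\<bar>) n i) * \<bar>v i\<bar>)"
  unfolding phi_norm_def using phi_has_int by (rule integral_unique)

lemma phi_ge:
  assumes "inj_on \<sigma> {..<n}" "\<forall>i<n. \<sigma> i \<ge> 1"
  shows "(\<Sum>i<n. cw (\<sigma> i) * \<bar>v i\<bar>) \<le> phi_norm n v"
proof -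
  have "(\<Sum>i<n. cw (\<sigma> i) * \<bar>v i\<bar>) \<le> (\<Sum>i<n. cw (rk (\<lambda>j. \<bar>v j\<bar>) n i) * \<bar>v i\<bar>)"
  proof (rule has_integral_le[OF layer_int phi_has_int])
    fix x :: real
    have "(\<Sum>i<n. cw (\<sigma> i) * (if \<bar>v i\<bar> \<ge> x then 1 else 0)) = (\<Sum>i\<in>{j. j < n \<and> \<bar>v j\<bar> \<ge> x}. cw (\<sigma> i))"
      by (rule sum_indicator_eq)
    also have "\<dots> \<le> sqrt (real (card {j. j < n \<and> \<bar>v j\<bar> \<ge> x}))"
      using assms by (intro cw_inj_sum) (auto intro: inj_on_subset)
    finally show "(\<Sum>i<n. cw (\<sigma> i) * (if \<bar>v i\<bar> \<ge> x then 1 else 0)) \<le> sqrt (real (card {i. i < n \<and> \<bar>v i\<bar> \<ge> x}))" .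
  qed simp
  then show ?thesis by (simp add: phi_eq)
qed

lemma phi_dual:
  assumes "\<And>y. y \<ge> 0 \<Longrightarrow> (\<Sum>j\<in>{j. j < n \<and> \<bar>v j\<bar> \<ge> y}. g j) \<le> M * sqrt (real (card {j. j < n \<and> \<bar>v j\<bar> \<ge> y}))"
  shows "(\<Sum>j<n. g j * \<bar>v j\<bar>) \<le> M * phi_norm n v"
proof -
  have "(\<Sum>j<n. g j * \<bar>v j\<bar>) \<le> M * (\<Sum>i<n. cw (rk (\<lambda>j. \<bar>v j\<bar>) n i) * \<bar>v i\<bar>)"
  proof (rule has_integral_le[OF layer_int has_integral_mult_right[OF phi_has_int]])
    fix x :: real assume "x \<in> {0..}"
    then show "(\<Sum>i<n. g i * (if \<bar>v i\<bar> \<ge> x then 1 else 0)) \<le> M * sqrt (real (card {i. i < n \<and> \<bar>v i\<bar> \<ge> x}))"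
      using assms[of x] sum_indicator_eq[where w=g and n=n and a="\<lambda>j. \<bar>v j\<bar>" and x=x] by simp
  qed simp
  then show ?thesis by (simp add: phi_eq)
qed

lemma phi_pos: assumes "i0 < n" "v i0 \<noteq> 0" shows "phi_norm n v > 0"
proof -
  have "phi_norm n v = (\<Sum>i<n. cw (rk (\<lambda>j. \<bar>v j\<bar>) n i) * \<bar>v i\<bar>)" by (rule phi_eq)
  also have "\<dots> \<ge> cw (rk (\<lambda>j. \<bar>v j\<bar>) n i0) * \<bar>v i0\<bar>"
    using assms by (intro member_le_sum) (auto intro: mult_nonneg_nonneg cw_nonneg)
  moreover have "cw (rk (\<lambda>j. \<bar>v j\<bar>) n i0) * \<bar>v i0\<bar> > 0"
    using assms rk_ge1 cw_pos by simp
  ultimately show ?thesis by linarith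
qed


lemma sum_adj_card:
  assumes "finite S"
  shows "(\<Sum>j\<in>S. adj_matrix E i j) = real (card {j\<in>S. E i j})"
proof -
  have "(\<Sum>j\<in>S. adj_matrix E i j) = (\<Sum>j\<in>S. if E i j then 1 else 0)" by (simp add: adj_matrix_def)
  also have "\<dots> = (\<Sum>j\<in>{j\<in>S. E i j}. 1)" using assms by (simp add: sum.If_cases Int_def)
  finally show ?thesis by simp
qed

lemma op_bound:
  assumes M0: "M \<ge> 0"
    and core: "\<And>S \<rho>. S \<subseteq> {..<n} \<Longrightarrow> inj_on \<rho> {..<n} \<Longrightarrow> (\<forall>i<n. \<rho> i \<ge> 1) \<Longrightarrow>
        (\<Sum>i<n. cw (\<rho> i) * real (card {j\<in>S. E i j})) \<le> M * sqrt (real (card S))"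
  shows "phi_op_norm n (adj_matrix E) \<le> M"
proof -
  let ?A = "adj_matrix E"
  have A0: "?A i j \<ge> 0" for i j by (simp add: adj_matrix_def)
  have ratio: "phi_norm n (mat_vec n ?A v) / phi_norm n v \<le> M" if "i0 < n" "v i0 \<noteq> 0" for v i0
  proof -
    define w where "w = mat_vec n ?A v"
    define \<rho> where "\<rho> = rk (\<lambda>j. \<bar>w j\<bar>) n"
    have inj: "inj_on \<rho> {..<n}" unfolding \<rho>_def by (rule rk_inj)
    have ge1: "\<forall>i<n. \<rho> i \<ge> 1" unfolding \<rho>_def using rk_ge1 by blast
    define g where "g j = (\<Sum>i<n. cw (\<rho> i) * ?A i j)" for j
    have "phi_norm n w = (\<Sum>i<n. cw (\<rho> i) * \<bar>w i\<bar>)" unfolding \<rho>_def by (rule phi_eq)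
    also have "\<dots> \<le> (\<Sum>i<n. cw (\<rho> i) * (\<Sum>j<n. ?A i j * \<bar>v j\<bar>))"
    proof (intro sum_mono mult_left_mono cw_nonneg)
      fix i
      have "\<bar>w i\<bar> = \<bar>\<Sum>j<n. ?A i j * v j\<bar>" by (simp add: w_def mat_vec_def)
      also have "\<dots> \<le> (\<Sum>j<n. \<bar>?A i j * v j\<bar>)" by (rule sum_abs)
      also have "\<dots> = (\<Sum>j<n. ?A i j * \<bar>v j\<bar>)" using A0 by (simp add: abs_mult)
      finally show "\<bar>w i\<bar> \<le> (\<Sum>j<n. ?A i j * \<bar>v j\<bar>)" .
    qed
    also have "\<dots> = (\<Sum>j<n. g j * \<bar>v j\<bar>)"
    proof -
      have "(\<Sum>i<n. cw (\<rho> i) * (\<Sum>j<n. ?A i j * \<bar>v j\<bar>)) = (\<Sum>i<n. \<Sum>j<n. cw (\<rho> i) * ?A i j * \<bar>v j\<bar>)"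
        by (simp add: sum_distrib_left mult.assoc)
      also have "\<dots> = (\<Sum>j<n. \<Sum>i<n. cw (\<rho> i) * ?A i j * \<bar>v j\<bar>)" by (rule sum.swap)
      also have "\<dots> = (\<Sum>j<n. g j * \<bar>v j\<bar>)" unfolding g_def by (simp add: sum_distrib_right)
      finally show ?thesis .
    qed
    also have "\<dots> \<le> M * phi_norm n v"
    proof (rule phi_dual)
      fix y :: real
      let ?S = "{j. j < n \<and> y \<le> \<bar>v j\<bar>}"
      have "(\<Sum>j\<in>?S. g j) = (\<Sum>i<n. cw (\<rho> i) * (\<Sum>j\<in>?S. ?A i j))"
        unfolding g_def by (simp add: sum_distrib_left) (rule sum.swap)
      also have "\<dots> = (\<Sum>i<n. cw (\<rho> i) * real (card {j\<in>?S. E i j}))"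
        by (simp add: sum_adj_card)
      also have "\<dots> \<le> M * sqrt (real (card ?S))"
        by (rule core[OF _ inj ge1]) auto
      finally show "(\<Sum>j\<in>?S. g j) \<le> M * sqrt (real (card ?S))" .
    qed
    finally have "phi_norm n w \<le> M * phi_norm n v" .
    moreover have "phi_norm n v > 0" using that by (rule phi_pos)
    ultimately show ?thesis unfolding w_def by (simp add: divide_le_eq)
  qed
  show ?thesis unfolding phi_op_norm_def
    using M0 ratio by (intro cSup_least) auto
qed


lemma real_as_layers: assumes "d \<le> D"
  shows "real d = (\<Sum>h\<in>{1..D}. if h \<le> d then 1 else (0::real))"
proof -
  have "(\<Sum>h\<in>{1..D}. if h \<le> d then 1 else (0::real)) = (\<Sum>h\<in>{1..D}. if h \<in> {h. h \<le> d} then 1 else (0::real))"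
    by simp
  also have "\<dots> = (\<Sum>h\<in>{1..D} \<inter> {h. h \<le> d}. 1)"
    by (rule sum.inter_restrict[symmetric]) simp
  also have "{1..D} \<inter> {h. h \<le> d} = {1..d}" using assms by auto
  finally show ?thesis by simp
qed

lemma layer_sum:
  fixes d :: "nat \<Rightarrow> nat"
  assumes "\<forall>i<n. d i \<le> D" "inj_on \<rho> {..<n}" "\<forall>i<n. \<rho> i \<ge> 1"
  shows "(\<Sum>i<n. cw (\<rho> i) * real (d i)) \<le> (\<Sum>h\<in>{1..D}. sqrt (real (card {i. i < n \<and> d i \<ge> h})))"
proof -
  have "(\<Sum>i<n. cw (\<rho> i) * real (d i)) = (\<Sum>i<n. \<Sum>h\<in>{1..D}. cw (\<rho> i) * (if h \<le> d i then 1 else 0))"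
    using assms(1) by (intro sum.cong refl) (simp add: real_as_layers[of _ D] sum_distrib_left)
  also have "\<dots> = (\<Sum>h\<in>{1..D}. \<Sum>i<n. cw (\<rho> i) * (if h \<le> d i then 1 else 0))" by (rule sum.swap)
  also have "\<dots> \<le> (\<Sum>h\<in>{1..D}. sqrt (real (card {i. i < n \<and> d i \<ge> h})))"
  proof (rule sum_mono)
    fix h
    have "(\<Sum>i<n. cw (\<rho> i) * (if h \<le> d i then 1 else 0)) = (\<Sum>i\<in>{j. j < n \<and> real h \<le> real (d j)}. cw (\<rho> i))"
      using sum_indicator_eq[where w="\<lambda>i. cw (\<rho> i)" and n=n and a="\<lambda>i. real (d i)" and x="real h"] by simp
    also have "{j. j < n \<and> real h \<le> real (d j)} = {i. i < n \<and> d i \<ge> h}" by auto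
    also have "(\<Sum>i\<in>{i. i < n \<and> d i \<ge> h}. cw (\<rho> i)) \<le> sqrt (real (card {i. i < n \<and> d i \<ge> h}))"
      using assms by (intro cw_inj_sum) (auto intro: inj_on_subset)
    finally show "(\<Sum>i<n. cw (\<rho> i) * (if h \<le> d i then 1 else 0)) \<le> sqrt (real (card {i. i < n \<and> d i \<ge> h}))" .
  qed
  finally show ?thesis .
qed

lemma deg_le_max: "i < n \<Longrightarrow> degree n E i \<le> max_degree n E"
  unfolding max_degree_def by (intro Max_ge) auto

lemma dS_le_deg: "S \<subseteq> {..<n} \<Longrightarrow> card {j\<in>S. E i j} \<le> degree n E i"
  unfolding degree_def by (intro card_mono) auto

lemma handshake:
  assumes "simple_graph n E"
  shows "card {(i, j). i < n \<and> j < n \<and> E i j} = 2 * num_edges n E"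
proof -
  let ?L = "{(i, j). i < j \<and> j < n \<and> E i j}"
  have fin: "finite ?L" by (rule finite_subset[of _ "{..<n} \<times> {..<n}"]) auto
  have "{(i, j). i < n \<and> j < n \<and> E i j} = ?L \<union> prod.swap ` ?L"
  proof (intro set_eqI iffI)
    fix p assume "p \<in> {(i, j). i < n \<and> j < n \<and> E i j}"
    then obtain i j where p: "p = (i, j)" "i < n" "j < n" "E i j" by auto
    then have "i \<noteq> j" "E j i" using assms unfolding simple_graph_def by auto
    then show "p \<in> ?L \<union> prod.swap ` ?L" using p
      by (cases "i < j") (auto simp: image_iff intro!: bexI[of _ "(j, i)"])
  next
    fix p assume "p \<in> ?L \<union> prod.swap ` ?L"
    then show "p \<in> {(i, j). i < n \<and> j < n \<and> E i j}" using assms unfolding simple_graph_def by auto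
  qed
  moreover have "?L \<inter> prod.swap ` ?L = {}" by auto
  moreover have "card (prod.swap ` ?L) = card ?L" by (simp add: card_image)
  ultimately show ?thesis unfolding num_edges_def using fin by (simp add: card_Un_disjoint)
qed

lemma cycles_fin:
  assumes "simple_graph n E"
  shows "finite (cycles_2k k E)"
proof -
  have "cycles_2k k E \<subseteq> Pow (Pow {..<n})"
  proof
    fix S assume "S \<in> cycles_2k k E"
    then obtain f where f: "\<forall>i<2*k. E (f i) (f (Suc i mod (2*k)))"
      "S = {{f i, f (Suc i mod (2*k))} | i. i < 2*k}" unfolding cycles_2k_def by auto
    have "f i < n \<and> f (Suc i mod (2*k)) < n" if "i < 2*k" for i
      using f(1) that assms unfolding simple_graph_def by blast
    then show "S \<in> Pow (Pow {..<n})" using f(2) by auto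
  qed
  then show ?thesis by (rule finite_subset) auto
qed

lemma cycles_mono:
  assumes "\<And>x y. E' x y \<Longrightarrow> E x y"
  shows "cycles_2k k E' \<subseteq> cycles_2k k E"
  unfolding cycles_2k_def using assms by blast

lemma cycles_pos_deg:
  assumes "simple_graph n E" "k \<ge> 2" "num_cycles_2k k E > 0"
  shows "max_degree n E \<ge> 2"
proof -
  have "cycles_2k k E \<noteq> {}" using assms(3) unfolding num_cycles_2k_def by (metis card.empty less_irrefl)
  then obtain f where f: "inj_on f {..<2*k}" "\<forall>i<2*k. E (f i) (f (Suc i mod (2*k)))"
    unfolding cycles_2k_def by auto
  let ?m = "2 * k - 1"
  have m: "?m < 2 * k" "Suc ?m mod (2*k) = 0" "?m \<noteq> 1" using assms(2) by auto
  have e1: "E (f 0) (f 1)" using f(2)[rule_format, of 0] assms(2) by simp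
  have e2: "E (f ?m) (f 0)" using f(2)[rule_format, of ?m] m by simp
  then have e2': "E (f 0) (f ?m)" using assms(1) unfolding simple_graph_def by blast
  have "1 < 2 * k" using assms(2) by simp
  then have ne: "f 1 \<noteq> f ?m" using inj_onD[OF f(1), of 1 ?m] m by auto
  have n0: "f 0 < n" using e1 assms(1) unfolding simple_graph_def by blast
  have "{f 1, f ?m} \<subseteq> {j. j < n \<and> E (f 0) j}" using e1 e2' assms(1) unfolding simple_graph_def by blast
  then have "card {f 1, f ?m} \<le> degree n E (f 0)" unfolding degree_def by (intro card_mono) auto
  then have "degree n E (f 0) \<ge> 2" using ne by simp
  then show ?thesis using deg_le_max[OF n0, of E] by linarith
qed


lemma count_cut:
  assumes "finite W" "x \<in> W" "y \<in> W" "x \<noteq> y"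
  shows "card {U\<in>Pow W. x \<in> U \<and> y \<notin> U} = 2 ^ (card W - 2)"
proof -
  have img: "insert x ` Pow (W - {x, y}) = {U\<in>Pow W. x \<in> U \<and> y \<notin> U}"
  proof (intro set_eqI iffI)
    fix U assume "U \<in> {U\<in>Pow W. x \<in> U \<and> y \<notin> U}"
    then have "U = insert x (U - {x})" "U - {x} \<in> Pow (W - {x, y})" by auto
    then show "U \<in> insert x ` Pow (W - {x, y})" by blast
  qed (use assms in auto)
  have inj: "inj_on (insert x) (Pow (W - {x, y}))"
  proof (rule inj_onI)
    fix A B assume A: "A \<in> Pow (W - {x, y})" and B: "B \<in> Pow (W - {x, y})" and eq: "insert x A = insert x B"
    have "x \<notin> A" "x \<notin> B" using A B by auto
    then have "A = insert x A - {x}" "B = insert x B - {x}" by auto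
    then show "A = B" using eq by simp
  qed
  have "card {U\<in>Pow W. x \<in> U \<and> y \<notin> U} = card (Pow (W - {x, y}))"
    using img inj by (metis card_image)
  also have "\<dots> = 2 ^ card (W - {x, y})" using assms by (simp add: card_Pow)
  also have "card (W - {x, y}) = card W - 2" using assms by (simp add: card_Diff_subset)
  finally show ?thesis .
qed

lemma partition_exists:
  fixes P :: "('a \<times> 'a) set"
  assumes W: "finite W" and PW: "P \<subseteq> W \<times> W" and irr: "\<forall>p\<in>P. fst p \<noteq> snd p"
  shows "\<exists>U\<subseteq>W. card P \<le> 4 * card (P \<inter> (U \<times> (W - U)))"
proof (cases "P = {}")
  case True then show ?thesis by auto
next
  case False
  then obtain p0 where p0: "p0 \<in> P" by auto
  have finP: "finite P" using W PW by (meson finite_SigmaI finite_subset)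
  have W2: "card W \<ge> 2"
  proof -
    have "{fst p0, snd p0} \<subseteq> W" using p0 PW by auto
    then have "card {fst p0, snd p0} \<le> card W" using W by (intro card_mono) auto
    then show ?thesis using irr p0 by auto
  qed
  define f where "f U = card (P \<inter> (U \<times> (W - U)))" for U
  have fsum: "f U = (\<Sum>p\<in>P. if fst p \<in> U \<and> snd p \<notin> U then 1 else 0)" if "U \<subseteq> W" for U
  proof -
    have "(\<Sum>p\<in>P. if fst p \<in> U \<and> snd p \<notin> U then 1 else (0::nat)) = card {p\<in>P. fst p \<in> U \<and> snd p \<notin> U}"
      using finP by (simp add: sum.If_cases Int_def)
    also have "{p\<in>P. fst p \<in> U \<and> snd p \<notin> U} = P \<inter> (U \<times> (W - U))" using PW by auto
    finally show ?thesis unfolding f_def by simp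
  qed
  have "(\<Sum>U\<in>Pow W. f U) = (\<Sum>U\<in>Pow W. \<Sum>p\<in>P. if fst p \<in> U \<and> snd p \<notin> U then 1 else 0)"
    using fsum by (intro sum.cong) auto
  also have "\<dots> = (\<Sum>p\<in>P. \<Sum>U\<in>Pow W. if fst p \<in> U \<and> snd p \<notin> U then 1 else 0)" by (rule sum.swap)
  also have "\<dots> = (\<Sum>p\<in>P. card {U\<in>Pow W. fst p \<in> U \<and> snd p \<notin> U})"
    using W by (intro sum.cong refl) (simp add: sum.If_cases Int_def)
  also have "\<dots> = (\<Sum>p\<in>P. 2 ^ (card W - 2))"
    using PW irr W by (intro sum.cong refl count_cut) auto
  finally have total: "(\<Sum>U\<in>Pow W. f U) = card P * 2 ^ (card W - 2)" by simp
  show ?thesis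
  proof (rule ccontr)
    assume "\<not> ?thesis"
    then have lt: "4 * f U < card P" if "U \<in> Pow W" for U using that unfolding f_def by auto
    have "(\<Sum>U\<in>Pow W. 4 * f U) < (\<Sum>U\<in>Pow W. card P)"
      using W lt by (intro sum_strict_mono) auto
    also have "\<dots> = 2 ^ card W * card P" using W by (simp add: card_Pow)
    also have "(2::nat) ^ card W = 4 * 2 ^ (card W - 2)"
    proof -
      have "card W = (card W - 2) + 2" using W2 by simp
      then have "(2::nat) ^ card W = 2 ^ (card W - 2) * 2 ^ 2" by (metis power_add)
      then show ?thesis by simp
    qed
    finally have "(\<Sum>U\<in>Pow W. 4 * f U) < 4 * (card P * 2 ^ (card W - 2))"
      by (simp add: mult_ac)
    then have "4 * (\<Sum>U\<in>Pow W. f U) < 4 * (card P * 2 ^ (card W - 2))"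
      by (simp add: sum_distrib_left)
    then show False using total by simp
  qed
qed


definition supsat_CC :: "nat \<Rightarrow> real \<Rightarrow> real \<Rightarrow> bool" where
  "supsat_CC k C c \<longleftrightarrow> (\<forall>(A :: nat set) (B :: nat set) (F :: (nat \<times> nat) set).
        finite A \<longrightarrow> finite B \<longrightarrow> A \<inter> B = {} \<longrightarrow> F \<subseteq> A \<times> B \<longrightarrow>
        real (card F) \<ge> C * (real (card A) + real (card B)
                            + (real (card A) * real (card B)) powr (real (k+1) / real (2*k)))
        \<longrightarrow> real (num_cycles_2k k (bip_rel F))
              \<ge> c * real (card F) ^ (2*k) / (real (card A) ^ k * real (card B) ^ k))"

lemma graph_cases:
  fixes C c :: real
  assumes ss: "supsat_CC k C c" and Cp: "C > 0" and cp: "c > 0"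
    and G: "simple_graph n E" and S: "S \<subseteq> {..<n}" and h1: "h \<ge> 1"
    and Npos: "card {i. i < n \<and> card {j\<in>S. E i j} \<ge> h} > 0"
  shows "\<exists>e::real. real h * real (card {i. i < n \<and> card {j\<in>S. E i j} \<ge> h}) \<le> e
     \<and> e \<le> real (card S) * real (max_degree n E) \<and> e \<le> 2 * real (num_edges n E)
     \<and> (c * (e/4) ^ (2*k) / (real (card {i. i < n \<and> card {j\<in>S. E i j} \<ge> h}) ^ k * real (card S) ^ k)
            \<le> real (num_cycles_2k k E)
        \<or> e < 4 * C * (real (card {i. i < n \<and> card {j\<in>S. E i j} \<ge> h}) + real (card S)
             + (real (card {i. i < n \<and> card {j\<in>S. E i j} \<ge> h}) * real (card S)) powr (real (k+1) / real (2*k))))"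
proof -
  define T where "T = {i. i < n \<and> card {j\<in>S. E i j} \<ge> h}"
  define N where "N = card T"
  define s where "s = card S"
  define D where "D = max_degree n E"
  define \<alpha> where "\<alpha> = real (k+1) / real (2*k)"
  define P where "P = Sigma T (\<lambda>i. {j\<in>S. E i j})"
  have finT: "finite T" unfolding T_def by auto
  have finS: "finite S" using S finite_subset by blast
  have finP: "finite P" unfolding P_def using finT finS by auto
  have symE: "E x y \<Longrightarrow> E y x" for x y using G unfolding simple_graph_def by blast
  have cardP: "card P = (\<Sum>i\<in>T. card {j\<in>S. E i j})" unfolding P_def using finT finS by (simp add: card_SigmaI)
  have e_low: "h * N \<le> card P"
  proof -
    have "(\<Sum>i\<in>T. h) \<le> (\<Sum>i\<in>T. card {j\<in>S. E i j})" by (intro sum_mono) (auto simp: T_def)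
    then show ?thesis unfolding cardP N_def by (simp add: mult.commute)
  qed
  have e_sD: "card P \<le> s * D"
  proof -
    have "P = prod.swap ` Sigma S (\<lambda>j. {i\<in>T. E i j})" unfolding P_def by auto
    then have "card P = card (Sigma S (\<lambda>j. {i\<in>T. E i j}))" by (simp add: card_image)
    also have "\<dots> = (\<Sum>j\<in>S. card {i\<in>T. E i j})" using finT finS by (simp add: card_SigmaI)
    also have "\<dots> \<le> (\<Sum>j\<in>S. D)"
    proof (rule sum_mono)
      fix j assume j: "j \<in> S"
      have "card {i\<in>T. E i j} \<le> degree n E j" unfolding degree_def
        by (intro card_mono) (auto simp: T_def symE)
      also have "\<dots> \<le> D" unfolding D_def using j S by (intro deg_le_max) auto
      finally show "card {i\<in>T. E i j} \<le> D" .
    qed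
    finally show ?thesis by (simp add: s_def)
  qed
  have e_m: "card P \<le> 2 * num_edges n E"
  proof -
    have "P \<subseteq> {(i, j). i < n \<and> j < n \<and> E i j}" unfolding P_def T_def using S by auto
    then have "card P \<le> card {(i, j). i < n \<and> j < n \<and> E i j}"
      by (intro card_mono) (auto intro: finite_subset[of _ "{..<n} \<times> {..<n}"])
    then show ?thesis using handshake[OF G] by simp
  qed
  define W where "W = T \<union> S"
  have PW: "P \<subseteq> W \<times> W" unfolding P_def W_def by auto
  have irr: "\<forall>p\<in>P. fst p \<noteq> snd p" unfolding P_def using G unfolding simple_graph_def by auto
  obtain U where U: "U \<subseteq> W" "card P \<le> 4 * card (P \<inter> (U \<times> (W - U)))"
    using partition_exists[OF _ PW irr] finT finS W_def by auto
  define F where "F = P \<inter> (U \<times> (W - U))"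
  define A' where "A' = T \<inter> U"
  define B' where "B' = S - U"
  have FAB: "F \<subseteq> A' \<times> B'" unfolding F_def A'_def B'_def P_def W_def by auto
  have disj: "A' \<inter> B' = {}" unfolding A'_def B'_def by auto
  have finA: "finite A'" "finite B'" unfolding A'_def B'_def using finT finS by auto
  have cA: "card A' \<le> N" unfolding A'_def N_def using finT by (intro card_mono) auto
  have cB: "card B' \<le> s" unfolding B'_def s_def using finS by (intro card_mono) auto
  have F4: "real (card P) \<le> 4 * real (card F)" using U(2) unfolding F_def by linarith
  have Npos': "N > 0" using Npos unfolding N_def T_def by simp
  have hN1: "h * N \<ge> 1" using h1 Npos' by (simp add: Suc_le_eq)
  have cyc_le: "num_cycles_2k k (bip_rel F) \<le> num_cycles_2k k E"
  proof -
    have "bip_rel F x y \<Longrightarrow> E x y" for x y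
      unfolding bip_rel_def F_def P_def using symE by auto
    then show ?thesis unfolding num_cycles_2k_def
      by (intro card_mono cycles_fin[OF G] cycles_mono) auto
  qed
  have alt: "c * (real (card P)/4) ^ (2*k) / (real N ^ k * real s ^ k) \<le> real (num_cycles_2k k E)
     \<or> real (card P) < 4 * C * (real N + real s + (real N * real s) powr \<alpha>)"
  proof (cases "real (card F) \<ge> C * (real (card A') + real (card B') + (real (card A') * real (card B')) powr \<alpha>)")
    case True
    then have t1: "real (num_cycles_2k k (bip_rel F)) \<ge> c * real (card F) ^ (2*k) / (real (card A') ^ k * real (card B') ^ k)"
      using ss finA disj FAB unfolding supsat_CC_def \<alpha>_def by blast
    have "card P \<ge> 1" using hN1 e_low by linarith
    then have "real (card P) \<ge> 1" by simp
    then have "real (card F) > 0" using F4 by linarith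
    then have Fpos: "card F > 0" by simp
    then obtain p where "p \<in> F" by (metis card_gt_0_iff ex_in_conv)
    then have Ane: "card A' > 0" "card B' > 0" using FAB finA by (auto simp: card_gt_0_iff)
    have "c * (real (card P)/4) ^ (2*k) / (real N ^ k * real s ^ k)
        \<le> c * real (card F) ^ (2*k) / (real (card A') ^ k * real (card B') ^ k)"
    proof (rule frac_le)
      show "c * (real (card P) / 4) ^ (2 * k) \<le> c * real (card F) ^ (2 * k)"
        using F4 cp by (intro mult_left_mono power_mono) auto
      show "0 \<le> c * real (card F) ^ (2 * k)" using cp by simp
      show "0 < real (card A') ^ k * real (card B') ^ k" using Ane by simp
      show "real (card A') ^ k * real (card B') ^ k \<le> real N ^ k * real s ^ k"
        using cA cB by (intro mult_mono power_mono) auto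
    qed
    then show ?thesis using t1 cyc_le by linarith
  next
    case False
    have "(real (card A') * real (card B')) powr \<alpha> \<le> (real N * real s) powr \<alpha>"
      unfolding \<alpha>_def using cA cB by (intro powr_mono2 mult_mono) auto
    then have "real (card F) < C * (real N + real s + (real N * real s) powr \<alpha>)"
      using False cA cB Cp by (smt (verit) mult_left_mono of_nat_le_iff)
    then show ?thesis using F4 by linarith
  qed
  show ?thesis
    apply (rule exI[of _ "real (card P)"])
    using alt e_low e_sD e_m unfolding T_def[symmetric] N_def[symmetric] s_def[symmetric] D_def[symmetric] \<alpha>_def[symmetric]
    by (simp flip: of_nat_mult of_nat_le_iff) 
qed


lemma case_cyc:
  fixes x s h e t c :: real and k :: nat
  assumes k: "k \<ge> 1" and c: "c > 0" and x: "x > 0" and s: "s > 0" and h: "h > 0"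
    and he: "h * x \<le> e" and cyc: "c * (e/4) ^ (2*k) / (x ^ k * s ^ k) \<le> t"
  shows "sqrt x \<le> 4 * (t/c) powr (1/(2*k)) * sqrt s / h"
proof -
  define y where "y = h^2 * x / (16 * s)"
  have ypos: "y > 0" unfolding y_def using h x s by simp
  have "(h*x/4) ^ (2*k) \<le> (e/4) ^ (2*k)" using he h x by (intro power_mono) auto
  moreover have "(h*x/4) ^ (2*k) = y ^ k * (x ^ k * s ^ k)"
  proof -
    have "(h*x/4) ^ (2*k) = ((h*x/4)^2) ^ k" by (simp add: power_mult)
    also have "(h*x/4)^2 = y * (x * s)" unfolding y_def using s by (simp add: power2_eq_square field_simps)
    finally show ?thesis by (simp add: power_mult_distrib)
  qed
  ultimately have "c * (y ^ k * (x ^ k * s ^ k)) / (x ^ k * s ^ k) \<le> t"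
    using cyc c x s by (smt (verit) divide_right_mono mult_left_mono zero_le_power mult_nonneg_nonneg)
  then have "c * y ^ k \<le> t" using x s by simp
  then have yk: "y ^ k \<le> t / c" using c by (simp add: field_simps)
  have "y = (y ^ k) powr (1 / real k)"
    using ypos k by (simp add: powr_realpow[symmetric] powr_powr)
  also have "\<dots> \<le> (t / c) powr (1 / real k)" using yk ypos by (intro powr_mono2) auto
  finally have yb: "y \<le> (t / c) powr (1 / real k)" .
  have "sqrt y \<le> sqrt ((t / c) powr (1 / real k))" using yb by simp
  also have "\<dots> = (t / c) powr (1 / real (2*k))"
    by (simp add: powr_half_sqrt[symmetric] powr_powr mult.commute)
  finally have sy: "sqrt y \<le> (t / c) powr (1 / real (2*k))" .
  have "x = 16 * s * y / h^2" unfolding y_def using h s by (simp add: field_simps)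
  then have "sqrt x = 4 * sqrt s * sqrt y / h"
    using h s ypos by (simp add: real_sqrt_mult real_sqrt_divide)
  also have "\<dots> \<le> 4 * sqrt s * (t / c) powr (1 / real (2*k)) / h"
    using sy h s by (intro divide_right_mono mult_left_mono) auto
  finally show ?thesis by (simp add: mult_ac)
qed

lemma case_a3:
  fixes x s h C :: real and k :: nat
  assumes k: "k \<ge> 2" and x: "x > 0" and s: "s > 0" and h: "h > 0" and C: "C > 0"
    and lt: "h * x < 12 * C * (x * s) powr (real (k+1) / real (2*k))"
  shows "sqrt x \<le> (12 * C) powr (real k / (real k - 1)) * s powr ((real k + 1) / (2 * (real k - 1)))
                  * h powr (- (real k / (real k - 1)))"
proof -
  define \<alpha> where "\<alpha> = real (k+1) / real (2*k)"
  define q where "q = real k / (real k - 1)"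
  have k1: "real k - 1 > 0" using k by simp
  have aq: "(1 - \<alpha>) * q = 1/2" unfolding \<alpha>_def q_def using k1 k by (simp add: field_simps)
  have aq2: "\<alpha> * q = (real k + 1) / (2 * (real k - 1))" unfolding \<alpha>_def q_def using k1 k by (simp add: field_simps)
  have q0: "q > 0" unfolding q_def using k1 k by simp
  define z where "z = x powr (1 - \<alpha>)"
  have zpos: "z > 0" unfolding z_def using x by simp
  have "x = x powr \<alpha> * z" unfolding z_def using x by (simp add: powr_add[symmetric])
  then have "h * z * x powr \<alpha> < 12 * C * s powr \<alpha> * x powr \<alpha>"
    using lt unfolding \<alpha>_def[symmetric] by (simp add: powr_mult mult_ac)
  then have "h * z < 12 * C * s powr \<alpha>" using x by simp
  then have zb: "z \<le> 12 * C * s powr \<alpha> / h" using h by (simp add: field_simps)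
  have "sqrt x = z powr q" unfolding z_def using x by (simp add: powr_powr aq powr_half_sqrt[symmetric])
  also have "\<dots> \<le> (12 * C * s powr \<alpha> / h) powr q" using zb zpos q0 by (intro powr_mono2) auto
  also have "\<dots> = (12 * C) powr q * s powr (\<alpha> * q) * h powr (- q)"
    by (simp add: powr_divide powr_mult powr_powr powr_minus_divide)
  finally show ?thesis unfolding aq2 unfolding q_def .
qed

lemma sqrtN_bound:
  fixes x s h e t c C D m :: real and k L :: nat
  assumes k: "k \<ge> 2" and c: "c > 0" and C: "C > 0" and x: "x > 0" and s: "s > 0" and h: "h > 0"
    and t: "t \<ge> 0"
    and he: "h * x \<le> e" and esD: "e \<le> s * D" and em: "e \<le> 2 * m"
    and alt: "c * (e/4) ^ (2*k) / (x ^ k * s ^ k) \<le> t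
        \<or> e < 4 * C * (x + s + (x * s) powr (real (k+1) / real (2*k)))"
  shows "sqrt x \<le> sqrt (12 * C * s / h) + (if h \<le> 12 * C then sqrt (s * D / h) else 0)
      + (if h \<le> L then sqrt (2 * m / h) else (12 * C) powr (real k / (real k - 1)) * s powr ((real k + 1) / (2 * (real k - 1)))
                  * h powr (- (real k / (real k - 1))))
      + 4 * (t/c) powr (1/(2*k)) * sqrt s / h"
  (is "_ \<le> ?B1 + ?B2 + ?B3 + ?B4")
proof -
  have D0: "s * D \<ge> 0" using he esD x h by (smt (verit) mult_pos_pos)
  have m0: "m \<ge> 0" using he em x h by (smt (verit) mult_pos_pos)
  have nn: "?B1 \<ge> 0" "?B2 \<ge> 0" "?B3 \<ge> 0" "?B4 \<ge> 0"
    using C s h D0 m0 t c by (auto intro!: divide_nonneg_pos mult_nonneg_nonneg)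
  have x_m: "sqrt x \<le> sqrt (2 * m / h)"
  proof -
    have "x \<le> 2 * m / h" using he em h by (simp add: field_simps)
    then show ?thesis by simp
  qed
  consider (cyc) "c * (e/4) ^ (2*k) / (x ^ k * s ^ k) \<le> t" | (a1) "h * x < 12 * C * s" | (a2) "h * x < 12 * C * x"
    | (a3) "h * x < 12 * C * (x * s) powr (real (k+1) / real (2*k))"
  proof -
    assume r: "c * (e/4) ^ (2*k) / (x ^ k * s ^ k) \<le> t \<Longrightarrow> thesis"
      "h * x < 12 * C * s \<Longrightarrow> thesis" "h * x < 12 * C * x \<Longrightarrow> thesis"
      "h * x < 12 * C * (x * s) powr (real (k+1) / real (2*k)) \<Longrightarrow> thesis"
    show thesis
    proof (cases "c * (e/4) ^ (2*k) / (x ^ k * s ^ k) \<le> t")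
      case True then show ?thesis by (rule r(1))
    next
      case False
      then have "e < 4 * C * (x + s + (x * s) powr (real (k+1) / real (2*k)))" using alt by blast
      then have "h * x < 4 * C * x + 4 * C * s + 4 * C * (x * s) powr (real (k+1) / real (2*k))"
        using he by (simp add: algebra_simps)
      then show ?thesis using r(2-4) by linarith
    qed
  qed
  then show ?thesis
  proof cases
    case cyc
    have "sqrt x \<le> ?B4" using case_cyc[OF _ c x s h he cyc] k by simp
    then show ?thesis using nn by linarith
  next
    case a1
    have "x \<le> 12 * C * s / h" using a1 h by (simp add: field_simps)
    then have "sqrt x \<le> ?B1" by simp
    then show ?thesis using nn by linarith
  next
    case a2
    then have "h < 12 * C" using x by simp
    moreover have "x \<le> s * D / h" using he esD h by (simp add: field_simps)
    ultimately have "sqrt x \<le> ?B2" by simp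
    then show ?thesis using nn by linarith
  next
    case a3
    have "sqrt x \<le> ?B3"
      using x_m case_a3[OF k x s h C a3] by simp
    then show ?thesis using nn by linarith
  qed
qed


lemma sum_inv_sqrt: "(\<Sum>h\<in>{1..D}. 1 / sqrt (real h)) \<le> 2 * sqrt (real D)"
proof (induction D)
  case 0 then show ?case by simp
next
  case (Suc D)
  have a: "sqrt (real D) \<le> sqrt (real (Suc D))" by simp
  have p: "sqrt (real (Suc D)) > 0" by simp
  have "1 / sqrt (real (Suc D)) \<le> 2 * sqrt (real (Suc D)) - 2 * sqrt (real D)"
  proof -
    have "sqrt (real (Suc D)) * sqrt (real (Suc D)) = real D + 1" by simp
    moreover have "sqrt (real D) * sqrt (real (Suc D)) \<le> real D + 1/2"
    proof -
      have "(sqrt (real D) * sqrt (real (Suc D)))^2 = real D * (real D + 1)"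
        by (simp add: power_mult_distrib)
      also have "\<dots> \<le> (real D + 1/2)^2" by (simp add: power2_eq_square algebra_simps)
      finally show ?thesis by (rule power2_le_imp_le) simp
    qed
    ultimately have "1 \<le> (2 * sqrt (real (Suc D)) - 2 * sqrt (real D)) * sqrt (real (Suc D))"
      by (simp add: algebra_simps)
    then show ?thesis using p by (simp add: field_simps)
  qed
  then show ?case using Suc by simp
qed

lemma sum_inv_sqrt_cut:
  assumes Y: "Y \<ge> 0"
  shows "(\<Sum>h\<in>{1..D}. if real h \<le> Y then 1 / sqrt (real h) else 0) \<le> 2 * sqrt Y"
proof -
  define J where "J = min D (nat \<lfloor>Y\<rfloor>)"
  have fl: "real x \<le> Y" if "x \<le> nat \<lfloor>Y\<rfloor>" for x
    using that of_nat_floor[OF Y] by (smt (verit) of_nat_le_iff)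
  have "(\<Sum>h\<in>{1..D}. if real h \<le> Y then 1 / sqrt (real h) else 0) = (\<Sum>h\<in>{1..D} \<inter> {h. real h \<le> Y}. 1 / sqrt (real h))"
    by (simp add: sum.inter_restrict)
  also have "{1..D} \<inter> {h. real h \<le> Y} = {1..J}"
    unfolding J_def using Y fl by (auto simp: le_nat_floor)
  also have "(\<Sum>h\<in>{1..J}. 1 / sqrt (real h)) \<le> 2 * sqrt (real J)" by (rule sum_inv_sqrt)
  also have "real J \<le> Y" unfolding J_def by (rule fl) simp
  finally show ?thesis by (smt (verit) real_sqrt_le_mono)
qed

lemma harm_bound: "(\<Sum>h\<in>{1..D}. 1 / real h) \<le> 1 + ln (real D)" if "D \<ge> 1"
  using that
proof (induction D rule: dec_induct)
  case base then show ?case by simp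
next
  case (step D)
  have D: "real D \<ge> 1" using step by simp
  have "ln (real D / real (Suc D)) \<le> real D / real (Suc D) - 1" by (rule ln_le_minus_one) (use D in simp)
  then have "1 / real (Suc D) \<le> ln (real (Suc D)) - ln (real D)"
    using D by (simp add: ln_div field_simps)
  then show ?case using step by simp
qed

lemma powr_step:
  fixes q h :: real
  assumes q: "q > 1" and h: "h \<ge> 2"
  shows "h powr (- q) \<le> ((h - 1) powr (1 - q) - h powr (1 - q)) / (q - 1)"
proof -
  have der: "\<And>x. h - 1 \<le> x \<Longrightarrow> x \<le> h \<Longrightarrow> DERIV (\<lambda>z. z powr (1 - q)) x :> (1 - q) * x powr ((1 - q) - 1)"
    using h by (intro has_real_derivative_powr) auto
  obtain z where z: "h - 1 < z" "z < h" "h powr (1 - q) - (h - 1) powr (1 - q) = (h - (h - 1)) * ((1 - q) * z powr ((1 - q) - 1))"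
    using MVT2[of "h - 1" h, OF _ der] by auto
  have "z powr (- q) \<ge> h powr (- q)" using z h q by (intro powr_mono2') auto
  moreover have "(h - 1) powr (1 - q) - h powr (1 - q) = (q - 1) * z powr (- q)" using z(3) by (simp add: algebra_simps)
  ultimately have "(q - 1) * h powr (- q) \<le> (h - 1) powr (1 - q) - h powr (1 - q)"
    using q by (metis diff_gt_0_iff_gt less_eq_real_def mult_left_mono)
  then show ?thesis using q by (simp add: le_divide_eq mult.commute)
qed

lemma tail_sum_pos:
  fixes q :: real
  assumes q: "q > 1" and L: "L \<ge> 1"
  shows "(\<Sum>h\<in>{L+1..D}. real h powr (- q)) \<le> real L powr (1 - q) / (q - 1)"
proof (cases "D \<ge> L")
  case False then show ?thesis using q by simp
next
  case True
  have "(\<Sum>h\<in>{L+1..D}. real h powr (- q)) \<le> (real L powr (1 - q) - real D powr (1 - q)) / (q - 1)"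
    using True
  proof (induction D rule: dec_induct)
    case base then show ?case by simp
  next
    case (step D)
    have "real (Suc D) powr (- q) \<le> ((real (Suc D) - 1) powr (1 - q) - real (Suc D) powr (1 - q)) / (q - 1)"
      using L step(1) q by (intro powr_step) auto
    then have "real (Suc D) powr (- q) \<le> (real D powr (1 - q) - real (Suc D) powr (1 - q)) / (q - 1)" by simp
    moreover have "{L+1..Suc D} = insert (Suc D) {L+1..D}" using step(1) by auto
    ultimately show ?case using step(3) q by (simp add: diff_divide_distrib)
  qed
  also have "\<dots> \<le> real L powr (1 - q) / (q - 1)" using q by (simp add: divide_right_mono)
  finally show ?thesis .
qed

lemma tail_sum_zero:
  fixes q :: real
  assumes q: "q > 1"
  shows "(\<Sum>h\<in>{1..D}. real h powr (- q)) \<le> q / (q - 1)"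
proof (cases "D \<ge> 1")
  case False then show ?thesis using q by simp
next
  case True
  then have "{1..D} = insert 1 {1+1..D}" by auto
  then have "(\<Sum>h\<in>{1..D}. real h powr (- q)) = 1 + (\<Sum>h\<in>{1+1..D}. real h powr (- q))" by simp
  also have "\<dots> \<le> 1 + 1 / (q - 1)" using tail_sum_pos[OF q, of 1 D] by simp
  also have "\<dots> = q / (q - 1)" using q by (simp add: field_simps)
  finally show ?thesis .
qed


lemma B3_final:
  fixes s m C :: real and k :: nat
  assumes k: "k \<ge> 2" and s: "s > 0" and m: "m > 0" and C: "C > 0"
  defines "q \<equiv> real k / (real k - 1)"
  defines "a \<equiv> (12 * C) powr q * s powr ((real k + 1) / (2 * (real k - 1)))"
  defines "h0 \<equiv> s * m powr (2 / (real k + 1) - 1) / 2"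
  defines "L \<equiv> nat \<lfloor>h0\<rfloor>"
  shows "sqrt (2 * m) * (2 * sqrt (real L)) + a * (if L = 0 then q / (q - 1) else real L powr (1 - q) / (q - 1))
     \<le> (2 + (12 * C) powr q * 2 powr (q - 1) * (2 powr (q - 1) + q) / (q - 1)) * (sqrt s * m powr (1 / (real k + 1)))"
proof -
  define Q where "Q = sqrt s * m powr (1 / (real k + 1))"
  define G where "G = (12 * C) powr q * 2 powr (q - 1)"
  have k1: "real k - 1 > 0" using k by simp
  have q1: "q > 1" unfolding q_def using k1 by (simp add: field_simps)
  have h0pos: "h0 > 0" unfolding h0_def using s m by simp
  have Q0: "Q \<ge> 0" unfolding Q_def using s by simp
  have G0: "G > 0" unfolding G_def using C by simp
  have I1: "sqrt (2 * m) * sqrt h0 = Q"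
  proof -
    have "2 * m * h0 = s * (m * m powr (2 / (real k + 1) - 1))" unfolding h0_def using m by simp
    also have "m * m powr (2 / (real k + 1) - 1) = m powr (2 / (real k + 1))"
    proof -
      have "m * m powr (2 / (real k + 1) - 1) = m powr 1 * m powr (2 / (real k + 1) - 1)" using m by simp
      also have "\<dots> = m powr (1 + (2 / (real k + 1) - 1))" by (rule powr_add[symmetric])
      also have "1 + (2 / (real k + 1) - 1) = 2 / (real k + 1)" by simp
      finally show ?thesis .
    qed
    also have "m powr (2 / (real k + 1)) = (m powr (1 / (real k + 1)))^2"
      by (simp add: powr_realpow[symmetric] powr_powr power2_eq_square powr_add[symmetric])
    finally have "2 * m * h0 = s * (m powr (1 / (real k + 1)))^2" .
    then have "sqrt (2 * m * h0) = sqrt s * m powr (1 / (real k + 1))"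
      by (simp add: real_sqrt_mult)
    then show ?thesis unfolding Q_def by (simp add: real_sqrt_mult[symmetric] mult.assoc)
  qed
  have I2: "a * h0 powr (1 - q) = G * Q"
  proof -
    have f1: "2 / (real k + 1) - 1 = - (real k - 1) / (real k + 1)" by (simp add: field_simps)
    have f2: "1 - q = - 1 / (real k - 1)" unfolding q_def using k1 by (simp add: field_simps)
    have e1: "(2 / (real k + 1) - 1) * (1 - q) = 1 / (real k + 1)"
    proof -
      have "real k * real k > 1" using k1 by (metis less_1_mult diff_gt_0_iff_gt)
      then show ?thesis unfolding f1 f2 using k1 by (simp add: field_simps)
    qed
    have e2: "(real k + 1) / (2 * (real k - 1)) + (1 - q) = 1/2"
    proof -
      have "(real k - 1) * (real k - 1) > 0" using k1 by simp
      then have "2 + real k * (real k * 2) > real k * 4" by (simp add: algebra_simps)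
      then show ?thesis unfolding q_def using k1 by (simp add: field_simps)
    qed
    have "h0 powr (1 - q) = s powr (1 - q) * m powr (1 / (real k + 1)) * 2 powr (q - 1)"
    proof -
      have "h0 powr (1 - q) = s powr (1 - q) * (m powr (2 / (real k + 1) - 1)) powr (1 - q) / 2 powr (1 - q)"
        unfolding h0_def by (simp add: powr_divide powr_mult)
      also have "(m powr (2 / (real k + 1) - 1)) powr (1 - q) = m powr (1 / (real k + 1))"
        by (simp add: powr_powr e1)
      finally have A: "h0 powr (1 - q) = s powr (1 - q) * m powr (1 / (real k + 1)) * (1 / 2 powr (1 - q))"
        by simp
      have B: "1 / (2::real) powr (1 - q) = 2 powr (q - 1)"
        by (simp add: powr_minus_divide[symmetric])
      show ?thesis unfolding A B ..
    qed
    then have "a * h0 powr (1 - q) = (12 * C) powr q * 2 powr (q - 1) * (s powr ((real k + 1) / (2 * (real k - 1))) * s powr (1 - q)) * m powr (1 / (real k + 1))"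
      unfolding a_def by (simp add: mult_ac)
    also have "s powr ((real k + 1) / (2 * (real k - 1))) * s powr (1 - q) = sqrt s"
      using s unfolding powr_add[symmetric] e2 by (simp add: powr_half_sqrt)
    finally show ?thesis unfolding G_def Q_def by (simp add: mult_ac)
  qed
  have a0: "a \<ge> 0" unfolding a_def by simp
  show ?thesis
  proof (cases "h0 \<ge> 1")
    case True
    have L1: "L \<ge> 1" unfolding L_def using True by (simp add: le_nat_floor)
    have Lh0: "real L \<le> h0" unfolding L_def using h0pos by (simp add: of_nat_floor)
    have Lh02: "real L \<ge> h0 / 2"
    proof -
      have "real L = real_of_int \<lfloor>h0\<rfloor>" unfolding L_def using h0pos by simp
      then have "h0 < real L + 1" using real_of_int_floor_add_one_gt[of h0] by linarith
      then show ?thesis using L1 by linarith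
    qed
    have t1: "sqrt (2 * m) * (2 * sqrt (real L)) \<le> 2 * Q"
    proof -
      have "sqrt (real L) \<le> sqrt h0" using Lh0 by simp
      then have "sqrt (2 * m) * sqrt (real L) \<le> sqrt (2 * m) * sqrt h0" using m by (intro mult_left_mono) auto
      then show ?thesis using I1 by linarith
    qed
    have "real L powr (1 - q) \<le> (h0 / 2) powr (1 - q)"
      using Lh02 h0pos q1 by (intro powr_mono2') auto
    also have "(h0 / 2) powr (1 - q) = h0 powr (1 - q) * 2 powr (q - 1)"
    proof -
      have "(h0 / 2) powr (1 - q) = h0 powr (1 - q) * (1 / 2 powr (1 - q))" by (simp add: powr_divide)
      also have "1 / (2::real) powr (1 - q) = 2 powr (q - 1)" by (simp add: powr_minus_divide[symmetric])
      finally show ?thesis .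
    qed
    finally have "a * (real L powr (1 - q) / (q - 1)) \<le> a * (h0 powr (1 - q) * 2 powr (q - 1)) / (q - 1)"
      using a0 q1 by (simp add: divide_right_mono mult_left_mono)
    also have "\<dots> = G * Q * 2 powr (q - 1) / (q - 1)" using I2 by (simp add: mult_ac)
    finally have t2: "a * (real L powr (1 - q) / (q - 1)) \<le> G * Q * 2 powr (q - 1) / (q - 1)" .
    define R where "R = G / (q - 1)"
    have R0: "R \<ge> 0" unfolding R_def using G0 q1 by simp
    have r1: "G * Q * 2 powr (q - 1) / (q - 1) = R * Q * 2 powr (q - 1)" unfolding R_def by simp
    have r2: "G * (2 powr (q - 1) + q) / (q - 1) = R * 2 powr (q - 1) + R * q" unfolding R_def
      by (simp add: add_divide_distrib distrib_left)
    have "R * q * Q \<ge> 0" using R0 q1 Q0 by simp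
    then have fin: "sqrt (2 * m) * (2 * sqrt (real L)) + a * (real L powr (1 - q) / (q - 1)) \<le> (2 + G * (2 powr (q - 1) + q) / (q - 1)) * Q"
      using t1 t2 unfolding r1 r2 by (simp add: algebra_simps)
    show ?thesis using fin L1 unfolding G_def[symmetric] Q_def[symmetric] by simp
  next
    case False
    then have "\<lfloor>h0\<rfloor> = 0" using h0pos by (simp add: floor_eq_iff)
    then have L0: "L = 0" unfolding L_def by simp
    have "1 \<le> h0 powr (1 - q)"
    proof -
      have "1 powr (1 - q) \<le> h0 powr (1 - q)" using False h0pos q1 by (intro powr_mono2') auto
      then show ?thesis by simp
    qed
    then have "a \<le> a * h0 powr (1 - q)" using a0 by (simp add: mult_le_cancel_left1)
    then have "a \<le> G * Q" using I2 by simp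
    then have "a * (q / (q - 1)) \<le> G * Q * (q / (q - 1))" using q1 by (intro mult_right_mono) auto
    also have "\<dots> \<le> (2 + G * (2 powr (q - 1) + q) / (q - 1)) * Q"
    proof -
      define R where "R = G / (q - 1)"
      have R0: "R \<ge> 0" unfolding R_def using G0 q1 by simp
      have r1: "G * Q * (q / (q - 1)) = R * q * Q" unfolding R_def by simp
      have r2: "G * (2 powr (q - 1) + q) / (q - 1) = R * 2 powr (q - 1) + R * q" unfolding R_def
        by (simp add: add_divide_distrib distrib_left)
      have "R * 2 powr (q - 1) * Q \<ge> 0" using R0 Q0 by simp
      then show ?thesis unfolding r1 r2 using Q0 by (simp add: algebra_simps)
    qed
    finally show ?thesis using L0 unfolding G_def[symmetric] Q_def[symmetric] by simp
  qed
qed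


lemma sums_bound:
  fixes s m t c C :: real and k L D :: nat
  assumes k: "k \<ge> 2" and s: "s > 0" and m: "m > 0" and c: "c > 0" and C: "C > 0" and t: "t \<ge> 0" and D: "D \<ge> 1"
  defines "q \<equiv> real k / (real k - 1)"
  defines "a \<equiv> (12 * C) powr q * s powr ((real k + 1) / (2 * (real k - 1)))"
  shows "(\<Sum>h\<in>{1..D}. sqrt (12 * C * s / real h) + (if real h \<le> 12 * C then sqrt (s * real D / real h) else 0)
      + (if real h \<le> real L then sqrt (2 * m / real h) else a * real h powr (- q))
      + 4 * (t/c) powr (1/(2*k)) * sqrt s / real h)
   \<le> sqrt (12 * C * s) * (2 * sqrt (real D)) + sqrt (s * real D) * (2 * sqrt (12 * C))
      + (sqrt (2 * m) * (2 * sqrt (real L)) + a * (if L = 0 then q / (q - 1) else real L powr (1 - q) / (q - 1)))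
      + 4 * (t/c) powr (1/(2*k)) * sqrt s * (1 + ln (real D))"
proof -
  have k1: "real k - 1 > 0" using k by simp
  have q1: "q > 1" unfolding q_def using k1 by (simp add: field_simps)
  have a0: "a \<ge> 0" unfolding a_def by simp
  have S1: "(\<Sum>h\<in>{1..D}. sqrt (12 * C * s / real h)) \<le> sqrt (12 * C * s) * (2 * sqrt (real D))"
  proof -
    have "(\<Sum>h\<in>{1..D}. sqrt (12 * C * s / real h)) = sqrt (12 * C * s) * (\<Sum>h\<in>{1..D}. 1 / sqrt (real h))"
      by (simp add: sum_distrib_left real_sqrt_divide)
    also have "\<dots> \<le> sqrt (12 * C * s) * (2 * sqrt (real D))"
      using C s by (intro mult_left_mono sum_inv_sqrt) auto
    finally show ?thesis .
  qed
  have S2: "(\<Sum>h\<in>{1..D}. if real h \<le> 12 * C then sqrt (s * real D / real h) else 0) \<le> sqrt (s * real D) * (2 * sqrt (12 * C))"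
  proof -
    have "(\<Sum>h\<in>{1..D}. if real h \<le> 12 * C then sqrt (s * real D / real h) else 0)
        = sqrt (s * real D) * (\<Sum>h\<in>{1..D}. if real h \<le> 12 * C then 1 / sqrt (real h) else 0)"
      unfolding sum_distrib_left by (intro sum.cong refl) (simp add: real_sqrt_divide)
    also have "\<dots> \<le> sqrt (s * real D) * (2 * sqrt (12 * C))"
      using C s by (intro mult_left_mono sum_inv_sqrt_cut) auto
    finally show ?thesis .
  qed
  have S3: "(\<Sum>h\<in>{1..D}. if real h \<le> real L then sqrt (2 * m / real h) else a * real h powr (- q))
      \<le> sqrt (2 * m) * (2 * sqrt (real L)) + a * (if L = 0 then q / (q - 1) else real L powr (1 - q) / (q - 1))"
  proof -
    have E: "(\<Sum>h\<in>{1..D}. if real h \<le> real L then sqrt (2 * m / real h) else a * real h powr (- q))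
       = sqrt (2 * m) * (\<Sum>h\<in>{1..D}. if real h \<le> real L then 1 / sqrt (real h) else 0)
         + a * (\<Sum>h\<in>{1..D}. if real h \<le> real L then 0 else real h powr (- q))"
      unfolding sum_distrib_left sum.distrib[symmetric] by (intro sum.cong refl) (simp add: real_sqrt_divide)
    have U1: "(\<Sum>h\<in>{1..D}. if real h \<le> real L then 1 / sqrt (real h) else 0) \<le> 2 * sqrt (real L)"
      by (rule sum_inv_sqrt_cut) simp
    have U2: "(\<Sum>h\<in>{1..D}. if real h \<le> real L then 0 else real h powr (- q))
        \<le> (if L = 0 then q / (q - 1) else real L powr (1 - q) / (q - 1))"
    proof -
      have "(\<Sum>h\<in>{1..D}. if real h \<le> real L then 0 else real h powr (- q))
          = (\<Sum>h\<in>{1..D} \<inter> {h. \<not> h \<le> L}. real h powr (- q))"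
        by (subst sum.inter_restrict) (auto intro: sum.cong)
      also have "{1..D} \<inter> {h. \<not> h \<le> L} = {L+1..D}" by auto
      finally have eq: "(\<Sum>h\<in>{1..D}. if real h \<le> real L then 0 else real h powr (- q)) = (\<Sum>h\<in>{L+1..D}. real h powr (- q))" .
      show ?thesis
      proof (cases "L = 0")
        case True then show ?thesis unfolding eq using tail_sum_zero[OF q1, of D] by simp
      next
        case False then show ?thesis unfolding eq using tail_sum_pos[OF q1, of L D] by simp
      qed
    qed
    have "sqrt (2 * m) * (\<Sum>h\<in>{1..D}. if real h \<le> real L then 1 / sqrt (real h) else 0) \<le> sqrt (2 * m) * (2 * sqrt (real L))"
      using U1 by (rule mult_left_mono) (use m in simp)
    moreover have "a * (\<Sum>h\<in>{1..D}. if real h \<le> real L then 0 else real h powr (- q)) \<le> a * (if L = 0 then q / (q - 1) else real L powr (1 - q) / (q - 1))"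
      using U2 a0 by (rule mult_left_mono)
    ultimately show ?thesis unfolding E by linarith
  qed
  have S4: "(\<Sum>h\<in>{1..D}. 4 * (t/c) powr (1/(2*k)) * sqrt s / real h) \<le> 4 * (t/c) powr (1/(2*k)) * sqrt s * (1 + ln (real D))"
  proof -
    have "(\<Sum>h\<in>{1..D}. 4 * (t/c) powr (1/(2*k)) * sqrt s / real h) = 4 * (t/c) powr (1/(2*k)) * sqrt s * (\<Sum>h\<in>{1..D}. 1 / real h)"
      by (simp add: sum_distrib_left)
    also have "\<dots> \<le> 4 * (t/c) powr (1/(2*k)) * sqrt s * (1 + ln (real D))"
      using s by (intro mult_left_mono harm_bound D) auto
    finally show ?thesis .
  qed
  show ?thesis using S1 S2 S3 S4 by (simp add: sum.distrib)
qed


lemma ln2_half: "ln (2::real) \<ge> 1/2"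
proof -
  have "ln (1/2::real) \<le> 1/2 - 1" by (rule ln_le_minus_one) simp
  then show ?thesis by (simp add: ln_div)
qed

lemma core_bound:
  fixes C c :: real and k :: nat
  assumes k: "k \<ge> 2" and ss: "supsat_CC k C c" and C: "C > 0" and c: "c > 0"
    and G: "simple_graph n E" and S: "S \<subseteq> {..<n}"
  defines "q \<equiv> real k / (real k - 1)"
  defines "K3 \<equiv> 2 + (12 * C) powr q * 2 powr (q - 1) * (2 powr (q - 1) + q) / (q - 1)"
  defines "Kc \<equiv> 4 * sqrt (12 * C) + K3 + 12 * (1 / c) powr (1 / real (2 * k))"
  shows "(\<Sum>h\<in>{1..max_degree n E}. sqrt (real (card {i. i < n \<and> card {j\<in>S. E i j} \<ge> h})))
    \<le> sqrt (real (card S)) * (Kc * (real (num_edges n E) powr (1 / (real k + 1))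
         + real (num_cycles_2k k E) powr (1 / real (2 * k)) * ln (real (max_degree n E))
         + sqrt (real (max_degree n E))))"
proof -
  define D where "D = max_degree n E"
  define s where "s = card S"
  define m where "m = num_edges n E"
  define t where "t = num_cycles_2k k E"
  define N where "N h = card {i. i < n \<and> card {j\<in>S. E i j} \<ge> h}" for h
  define A where "A = real m powr (1 / (real k + 1))"
  define B where "B = real t powr (1 / real (2 * k)) * ln (real D)"
  define Cc where "Cc = sqrt (real D)"
  have k1: "real k - 1 > 0" using k by simp
  have q1: "q > 1" unfolding q_def using k1 by (simp add: field_simps)
  have K3pos: "K3 > 0"
  proof -
    have a1: "(12 * C) powr q * 2 powr (q - 1) \<ge> 0" by simp
    have a2: "2 powr (q - 1) + q \<ge> 0" using q1 by (simp add: add_nonneg_nonneg)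
    have "(12 * C) powr q * 2 powr (q - 1) * (2 powr (q - 1) + q) / (q - 1) \<ge> 0"
      using a1 a2 q1 by (intro divide_nonneg_pos mult_nonneg_nonneg) auto
    then show ?thesis unfolding K3_def by linarith
  qed
  have Kcpos: "Kc > 0"
  proof -
    have "sqrt (12 * C) \<ge> 0" using C by simp
    moreover have "(1 / c) powr (1 / real (2 * k)) \<ge> 0" by simp
    ultimately show ?thesis unfolding Kc_def using K3pos by linarith
  qed
  have A0: "A \<ge> 0" unfolding A_def by simp
  have lnD: "ln (real D) \<ge> 0" by (cases "D = 0") auto
  have B0: "B \<ge> 0" unfolding B_def using lnD by simp
  have Cc0: "Cc \<ge> 0" unfolding Cc_def by simp
  have RHS0: "sqrt (real s) * (Kc * (A + B + Cc)) \<ge> 0" using Kcpos A0 B0 Cc0 by simp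
  have main: "(\<Sum>h\<in>{1..D}. sqrt (real (N h))) \<le> sqrt (real s) * (Kc * (A + B + Cc))"
  proof (cases "\<forall>h\<in>{1..D}. N h = 0")
    case True
    then have "(\<Sum>h\<in>{1..D}. sqrt (real (N h))) = 0" by simp
    then show ?thesis using RHS0 by linarith
  next
    case False
    then obtain h1 where h1: "h1 \<in> {1..D}" "N h1 > 0" by auto
    then have "{i. i < n \<and> card {j\<in>S. E i j} \<ge> h1} \<noteq> {}" unfolding N_def by (metis card.empty less_irrefl)
    then obtain i where i: "i < n" "card {j\<in>S. E i j} \<ge> h1" by blast
    then have "card {j\<in>S. E i j} \<noteq> 0" using h1 by simp
    then have "{j\<in>S. E i j} \<noteq> {}" by (metis card.empty)
    then obtain j where j: "j \<in> S" "E i j" by blast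
    have finS: "finite S" using S finite_subset by blast
    have "card S \<noteq> 0" using j finS by auto
    then have s1: "s \<ge> 1" unfolding s_def by simp
    have m1: "m \<ge> 1"
    proof -
      have jn: "j < n" using j S by auto
      have "(i, j) \<in> {(i, j). i < n \<and> j < n \<and> E i j}" using i j jn by simp
      moreover have "finite {(i, j). i < n \<and> j < n \<and> E i j}"
        by (rule finite_subset[of _ "{..<n} \<times> {..<n}"]) auto
      ultimately have "card {(i, j). i < n \<and> j < n \<and> E i j} \<noteq> 0" by (metis card_0_eq empty_iff)
      then show ?thesis using handshake[OF G] unfolding m_def by simp
    qed
    have D1: "D \<ge> 1" using h1 by simp
    have sp: "real s > 0" using s1 by simp
    have mp: "real m > 0" using m1 by simp
    define a where "a = (12 * C) powr q * real s powr ((real k + 1) / (2 * (real k - 1)))"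
    define h0 where "h0 = real s * real m powr (2 / (real k + 1) - 1) / 2"
    define L where "L = nat \<lfloor>h0\<rfloor>"
    define Bs where "Bs h = sqrt (12 * C * real s / real h) + (if real h \<le> 12 * C then sqrt (real s * real D / real h) else 0)
      + (if real h \<le> real L then sqrt (2 * real m / real h) else a * real h powr (- q))
      + 4 * (real t/c) powr (1/(2*k)) * sqrt (real s) / real h" for h :: nat
    have per_h: "sqrt (real (N h)) \<le> Bs h" if h: "h \<in> {1..D}" for h
    proof (cases "N h = 0")
      case True
      have "Bs h \<ge> 0" unfolding Bs_def a_def using C c sp
        by (intro add_nonneg_nonneg mult_nonneg_nonneg divide_nonneg_nonneg) auto
      then show ?thesis using True by simp
    next
      case False
      then have Np: "card {i. i < n \<and> card {j\<in>S. E i j} \<ge> h} > 0" unfolding N_def by linarith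
      obtain e where e: "real h * real (N h) \<le> e" "e \<le> real s * real D" "e \<le> 2 * real m"
        "c * (e/4) ^ (2*k) / (real (N h) ^ k * real s ^ k) \<le> real t
        \<or> e < 4 * C * (real (N h) + real s + (real (N h) * real s) powr (real (k+1) / real (2*k)))"
        using graph_cases[OF ss C c G S _ Np] h unfolding N_def s_def D_def m_def t_def by auto
      show ?thesis unfolding Bs_def a_def q_def
        by (rule sqrtN_bound[OF k c C _ sp _ _ e(1) e(2) e(3) e(4)]) (use False h in auto)
    qed
    have "(\<Sum>h\<in>{1..D}. sqrt (real (N h))) \<le> (\<Sum>h\<in>{1..D}. Bs h)" using per_h by (rule sum_mono)
    also have "\<dots> \<le> sqrt (12 * C * real s) * (2 * sqrt (real D)) + sqrt (real s * real D) * (2 * sqrt (12 * C))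
      + (sqrt (2 * real m) * (2 * sqrt (real L)) + a * (if L = 0 then q / (q - 1) else real L powr (1 - q) / (q - 1)))
      + 4 * (real t/c) powr (1/(2*k)) * sqrt (real s) * (1 + ln (real D))"
      unfolding Bs_def a_def q_def by (rule sums_bound[OF k sp mp c C _ D1]) simp
    also have "\<dots> \<le> sqrt (real s) * (4 * sqrt (12 * C) * Cc + K3 * A + 12 * (1 / c) powr (1 / real (2 * k)) * B)"
    proof -
      have X1: "sqrt (12 * C * real s) * (2 * sqrt (real D)) = sqrt (real s) * (2 * sqrt (12 * C) * Cc)"
      proof -
        have "sqrt (12 * C * real s) = sqrt (12 * C) * sqrt (real s)" by (rule real_sqrt_mult)
        then show ?thesis unfolding Cc_def by (simp only: mult_ac)
      qed
      have X2: "sqrt (real s * real D) * (2 * sqrt (12 * C)) = sqrt (real s) * (2 * sqrt (12 * C) * Cc)"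
      proof -
        have "sqrt (real s * real D) = sqrt (real s) * sqrt (real D)" by (rule real_sqrt_mult)
        then show ?thesis unfolding Cc_def by (simp only: mult_ac)
      qed
      have X3: "sqrt (2 * real m) * (2 * sqrt (real L)) + a * (if L = 0 then q / (q - 1) else real L powr (1 - q) / (q - 1))
          \<le> K3 * (sqrt (real s) * A)"
        unfolding K3_def A_def a_def L_def h0_def q_def using B3_final[OF k sp mp C] by simp
      have X4: "(real t/c) powr (1/(2*k)) * (1 + ln (real D)) \<le> 3 * ((1 / c) powr (1 / real (2 * k)) * B)"
      proof (cases "t = 0")
        case True then show ?thesis unfolding B_def by simp
      next
        case False
        then have "D \<ge> 2" unfolding D_def t_def using cycles_pos_deg[OF G k] by simp
        then have "ln (real D) \<ge> ln 2" by simp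
        then have l: "1 + ln (real D) \<le> 3 * ln (real D)" using ln2_half by linarith
        have "(real t/c) powr (1/(2*k)) = real t powr (1 / real (2 * k)) * (1 / c) powr (1 / real (2 * k))"
        proof -
          have "real t / c = real t * (1 / c)" by simp
          then show ?thesis by (simp only: powr_mult)
        qed
        moreover have "real t powr (1 / real (2 * k)) * (1 / c) powr (1 / real (2 * k)) \<ge> 0" by simp
        ultimately have "(real t/c) powr (1/(2*k)) * (1 + ln (real D)) \<le> (real t powr (1 / real (2 * k)) * (1 / c) powr (1 / real (2 * k))) * (3 * ln (real D))"
          using l by (simp only:) (rule mult_left_mono)
        then show ?thesis unfolding B_def by (simp add: mult_ac)
      qed
      have "4 * (real t/c) powr (1/(2*k)) * sqrt (real s) * (1 + ln (real D))
         = 4 * sqrt (real s) * ((real t/c) powr (1/(2*k)) * (1 + ln (real D)))" by (simp add: mult_ac)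
      also have "\<dots> \<le> 4 * sqrt (real s) * (3 * ((1 / c) powr (1 / real (2 * k)) * B))"
        using X4 by (intro mult_left_mono) auto
      finally have X4': "4 * (real t/c) powr (1/(2*k)) * sqrt (real s) * (1 + ln (real D))
          \<le> sqrt (real s) * (12 * (1 / c) powr (1 / real (2 * k)) * B)" by (simp add: mult_ac)
      have K3eq: "K3 * (sqrt (real s) * A) = sqrt (real s) * (K3 * A)" by (simp add: mult_ac)
      have R: "sqrt (real s) * (4 * sqrt (12 * C) * Cc + K3 * A + 12 * (1 / c) powr (1 / real (2 * k)) * B)
        = 2 * (sqrt (real s) * (2 * sqrt (12 * C) * Cc)) + sqrt (real s) * (K3 * A) + sqrt (real s) * (12 * (1 / c) powr (1 / real (2 * k)) * B)"
        by (simp add: algebra_simps)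
      show ?thesis unfolding R using X1 X2 X3 X4' K3eq by linarith
    qed
    also have "\<dots> \<le> sqrt (real s) * (Kc * (A + B + Cc))"
    proof (intro mult_left_mono)
      have "4 * sqrt (12 * C) * Cc \<le> Kc * Cc" unfolding Kc_def using Cc0 K3pos A0 by (intro mult_right_mono) auto
      moreover have "K3 * A \<le> Kc * A" unfolding Kc_def using A0 C by (intro mult_right_mono) auto
      moreover have "12 * (1 / c) powr (1 / real (2 * k)) * B \<le> Kc * B" unfolding Kc_def using B0 K3pos C
        by (intro mult_right_mono) auto
      ultimately show "4 * sqrt (12 * C) * Cc + K3 * A + 12 * (1 / c) powr (1 / real (2 * k)) * B \<le> Kc * (A + B + Cc)"
        by (simp add: distrib_left)
    qed simp
    finally show ?thesis .
  qed
  from main show ?thesis by (simp only: D_def N_def s_def A_def B_def Cc_def m_def t_def)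
qed


theorem mainTheorem2:
  fixes k :: nat
  assumes "k \<ge> 2" and "supersaturation k"
  shows "\<exists>K :: real. K > 0 \<and> (\<forall>(n :: nat) (E :: nat \<Rightarrow> nat \<Rightarrow> bool). simple_graph n E \<longrightarrow>
     phi_op_norm n (adj_matrix E) \<le>
       K * (real (num_edges n E) powr (1 / real (k + 1))
            + real (num_cycles_2k k E) powr (1 / real (2 * k)) * ln (real (max_degree n E))
            + sqrt (real (max_degree n E))))"
proof -
  from assms(2) obtain C c :: real where C: "C > 0" and c: "c > 0" and ss: "supsat_CC k C c"
    unfolding supersaturation_def supsat_CC_def by blast
  define q where "q = real k / (real k - 1)"
  define K3 where "K3 = 2 + (12 * C) powr q * 2 powr (q - 1) * (2 powr (q - 1) + q) / (q - 1)"
  define Kc where "Kc = 4 * sqrt (12 * C) + K3 + 12 * (1 / c) powr (1 / real (2 * k))"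
  have k1: "real k - 1 > 0" using assms(1) by simp
  have q1: "q > 1" unfolding q_def using k1 by (simp add: field_simps)
  have K3pos: "K3 > 0"
  proof -
    have a1: "(12 * C) powr q * 2 powr (q - 1) \<ge> 0" by simp
    have a2: "2 powr (q - 1) + q \<ge> 0" using q1 by (simp add: add_nonneg_nonneg)
    have "(12 * C) powr q * 2 powr (q - 1) * (2 powr (q - 1) + q) / (q - 1) \<ge> 0"
      using a1 a2 q1 by (intro divide_nonneg_pos mult_nonneg_nonneg) auto
    then show ?thesis unfolding K3_def by linarith
  qed
  have Kcpos: "Kc > 0"
  proof -
    have "sqrt (12 * C) \<ge> 0" using C by simp
    moreover have "(1 / c) powr (1 / real (2 * k)) \<ge> 0" by simp
    ultimately show ?thesis unfolding Kc_def using K3pos by linarith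
  qed
  show ?thesis
  proof (intro exI[of _ Kc] conjI allI impI)
    show "Kc > 0" by (rule Kcpos)
    fix n :: nat and E :: "nat \<Rightarrow> nat \<Rightarrow> bool"
    assume G: "simple_graph n E"
    define M where "M = Kc * (real (num_edges n E) powr (1 / real (k + 1))
            + real (num_cycles_2k k E) powr (1 / real (2 * k)) * ln (real (max_degree n E))
            + sqrt (real (max_degree n E)))"
    have lnD: "ln (real (max_degree n E)) \<ge> 0" by (cases "max_degree n E = 0") auto
    have M0: "M \<ge> 0" unfolding M_def using Kcpos lnD by (intro mult_nonneg_nonneg add_nonneg_nonneg) auto
    have "phi_op_norm n (adj_matrix E) \<le> M"
    proof (rule op_bound[OF M0])
      fix S :: "nat set" and \<rho> :: "nat \<Rightarrow> nat"
      assume S: "S \<subseteq> {..<n}" and inj: "inj_on \<rho> {..<n}" and ge1: "\<forall>i<n. \<rho> i \<ge> 1"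
      have dle: "\<forall>i<n. card {j\<in>S. E i j} \<le> max_degree n E"
        using dS_le_deg[OF S] deg_le_max le_trans by blast
      have "(\<Sum>i<n. cw (\<rho> i) * real (card {j\<in>S. E i j}))
          \<le> (\<Sum>h\<in>{1..max_degree n E}. sqrt (real (card {i. i < n \<and> card {j\<in>S. E i j} \<ge> h})))"
        by (rule layer_sum[OF dle inj ge1])
      also have "\<dots> \<le> sqrt (real (card S)) * M"
        using core_bound[OF assms(1) ss C c G S] unfolding M_def Kc_def K3_def q_def of_nat_add of_nat_1 by simp
      finally show "(\<Sum>i<n. cw (\<rho> i) * real (card {j\<in>S. E i j})) \<le> M * sqrt (real (card S))"
        by (simp add: mult.commute)
    qed
    then show "phi_op_norm n (adj_matrix E) \<le> Kc * (real (num_edges n E) powr (1 / real (k + 1))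
            + real (num_cycles_2k k E) powr (1 / real (2 * k)) * ln (real (max_degree n E))
            + sqrt (real (max_degree n E)))" unfolding M_def .
  qed
qed


end
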